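(* Let $(G,\mathbf p)$ be a framework (with $\mathbf p$ pinned) and let $E$ be a stiff-bar energy at $\mathbf p$. A trajectory $\mathbf p(t)$ at $\mathbf p$ is a $(j,k)$-flex of $(G,\mathbf p)$ if and only if it is a $(j,2k)$ $E$-flex. Furthermore, $\mathbf p(t)$ is a $(j,2k)$ $E$-flex if and only if it is a $(j,2k+1)$ $E$-flex.
   Context: Fix a dimension $d$. A configuration is $\mathbf p=(\mathbf p_1,\dots,\mathbf p_n)$, $\mathbf p_i\in\mathbb R^d$; a framework $(G,\mathbf p)$ consists of a graph $G$ on $\{1,\dots,n\}$ and a configuration with $\mathbf p_i\ne\mathbf p_j$ for every edge $ij$. A configuration $\mathbf q$ is in $\ell$-pinned position if $\mathbf q_1=0$ and, for $2\le i\le\ell+1$, $\mathbf q_i\in\mathrm{span}(e_1,\dots,e_{i-1})$; these form a linear space. If $\mathbf p$ has $\ell$-dimensional affine span, it is pinned if $\mathbf p_1,\dots,\mathbf p_{\ell+1}$ are affinely independent and $\mathbf p$ is in $\ell$-pinned position. Throughout, $\mathbf p$ is pinned with $\ell$-dimensional affine span, and all trajectories are $\ell$-pinned. A trajectory at $\mathbf p$ is an analytic non-constant map $t\mapsto\mathbf p(t)$ into $\ell$-pinned configuration space, $t\in[0,\varepsilon]$, with $\mathbf p(0)=\mathbf p$. A $C^k$ function $\varphi(t)$ is $k$-vanishing if $\varphi^{(i)}(0)=0$ for $1\le i\le k$, and $k$-active if $(k-1)$-vanishing but not $k$-vanishing. With $\mathbf m(\mathbf q)=(|\mathbf q_i-\mathbf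 q_j|^2)_{ij\in E(G)}$, a $(j,k)$-flex is a $j$-active trajectory with $\mathbf m(\mathbf p(t))$ $k$-vanishing. For a function $f$ on $\ell$-pinned configuration space analytic near $\mathbf p$, a $(j,k)$ $f$-flex is a $j$-active trajectory $\mathbf p(t)$ at $\mathbf p$ with $f(\mathbf p(t))$ $k$-vanishing; an $E$-flex is an $f$-flex with $f=E$. A stiff-bar energy at $\mathbf p$ is $E(\mathbf q)=\sum_{ij\in E(G)}E_{ij}(|\mathbf q_i-\mathbf q_j|)$, where each $E_{ij}:\mathbb R\to\mathbb R$ is analytic at $d_{ij}=|\mathbf p_i-\mathbf p_j|\ne0$, has a strict local minimum at $d_{ij}$, and $E_{ij}''(d_{ij})>0$. *)

theory Defs
  imports "HOL-Analysis.Analysis"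
begin

text \<open>Points are vectors in real^'d; the index type 'd is linearly ordered, so that
  the standard basis vectors are ordered e_1, e_2, ... (e_m is the axis vector at the
  index of rank m-1). Vertices are 1..n; a configuration is a map nat => real^'d
  (only the values on 1..n matter).\<close>

definition real_analytic_at :: "(real \<Rightarrow> real) \<Rightarrow> real \<Rightarrow> bool" where
  "real_analytic_at f x \<longleftrightarrow>
     (\<exists>r>0. \<exists>a::nat \<Rightarrow> real. \<forall>y. \<bar>y - x\<bar> < r \<longrightarrow> (\<lambda>k. a k * (y - x) ^ k) sums f y)"

definition first_axes_span :: "nat \<Rightarrow> (real^'d::{finite,linorder}) set" where
  "first_axes_span m = span {axis c 1 | c::'d. card {c'. c' < c} < m}"

definition pinned_position :: "nat \<Rightarrow> (nat \<Rightarrow> real^'d::{finite,linorder}) \<Rightarrow> bool" where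
  "pinned_position l q \<longleftrightarrow> q 1 = 0 \<and>
     (\<forall>i. 2 \<le> i \<and> i \<le> l + 1 \<longrightarrow> q i \<in> first_axes_span (i - 1))"

definition is_graph :: "nat \<Rightarrow> (nat \<times> nat) set \<Rightarrow> bool" where
  "is_graph n Ed \<longleftrightarrow> (\<forall>(i,j)\<in>Ed. 1 \<le> i \<and> i < j \<and> j \<le> n)"

definition framework :: "nat \<Rightarrow> (nat \<times> nat) set \<Rightarrow> (nat \<Rightarrow> real^'d::{finite,linorder}) \<Rightarrow> bool" where
  "framework n Ed p \<longleftrightarrow> is_graph n Ed \<and> (\<forall>(i,j)\<in>Ed. p i \<noteq> p j)"

definition pinned :: "nat \<Rightarrow> nat \<Rightarrow> (nat \<Rightarrow> real^'d::{finite,linorder}) \<Rightarrow> bool" where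
  "pinned n l p \<longleftrightarrow> aff_dim (p ` {1..n}) = int l \<and> l + 1 \<le> n \<and>
     inj_on p {1..l+1} \<and> \<not> affine_dependent (p ` {1..l+1}) \<and> pinned_position l p"

definition k_vanishing :: "(real \<Rightarrow> real) \<Rightarrow> nat \<Rightarrow> bool" where
  "k_vanishing \<phi> k \<longleftrightarrow> (\<forall>i\<in>{1..k}. (deriv ^^ i) \<phi> 0 = 0)"

definition k_active :: "(real \<Rightarrow> real) \<Rightarrow> nat \<Rightarrow> bool" where
  "k_active \<phi> k \<longleftrightarrow> k_vanishing \<phi> (k - 1) \<and> \<not> k_vanishing \<phi> k"

definition traj_vanishing :: "nat \<Rightarrow> (real \<Rightarrow> nat \<Rightarrow> real^'d::{finite,linorder}) \<Rightarrow> nat \<Rightarrow> bool" where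
  "traj_vanishing n P k \<longleftrightarrow> (\<forall>i\<in>{1..n}. \<forall>c. k_vanishing (\<lambda>t. P t i $ c) k)"

definition traj_active :: "nat \<Rightarrow> (real \<Rightarrow> nat \<Rightarrow> real^'d::{finite,linorder}) \<Rightarrow> nat \<Rightarrow> bool" where
  "traj_active n P k \<longleftrightarrow> traj_vanishing n P (k - 1) \<and> \<not> traj_vanishing n P k"

definition trajectory ::
  "nat \<Rightarrow> nat \<Rightarrow> (nat \<Rightarrow> real^'d::{finite,linorder}) \<Rightarrow> real \<Rightarrow> (real \<Rightarrow> nat \<Rightarrow> real^'d::{finite,linorder}) \<Rightarrow> bool" where
  "trajectory n l p \<epsilon> P \<longleftrightarrow> \<epsilon> > 0 \<and>
     (\<forall>t\<in>{0..\<epsilon>}. \<forall>i\<in>{1..n}. \<forall>c. real_analytic_at (\<lambda>s. P s i $ c) t) \<and>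
     (\<forall>t\<in>{0..\<epsilon>}. pinned_position l (P t)) \<and>
     (\<exists>t\<in>{0..\<epsilon>}. \<exists>i\<in>{1..n}. P t i \<noteq> P 0 i) \<and>
     (\<forall>i\<in>{1..n}. P 0 i = p i)"

definition bar_flex ::
  "nat \<Rightarrow> (nat \<times> nat) set \<Rightarrow> nat \<Rightarrow> (nat \<Rightarrow> real^'d::{finite,linorder}) \<Rightarrow> real \<Rightarrow> (real \<Rightarrow> nat \<Rightarrow> real^'d::{finite,linorder}) \<Rightarrow> nat \<Rightarrow> nat \<Rightarrow> bool" where
  "bar_flex n Ed l p \<epsilon> P j k \<longleftrightarrow> trajectory n l p \<epsilon> P \<and> traj_active n P j \<and>
     (\<forall>(a,b)\<in>Ed. k_vanishing (\<lambda>t. (norm (P t a - P t b))\<^sup>2) k)"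

definition f_flex ::
  "nat \<Rightarrow> nat \<Rightarrow> (nat \<Rightarrow> real^'d::{finite,linorder}) \<Rightarrow> real \<Rightarrow> ((nat \<Rightarrow> real^'d::{finite,linorder}) \<Rightarrow> real) \<Rightarrow> (real \<Rightarrow> nat \<Rightarrow> real^'d::{finite,linorder}) \<Rightarrow> nat \<Rightarrow> nat \<Rightarrow> bool" where
  "f_flex n l p \<epsilon> f P j k \<longleftrightarrow> trajectory n l p \<epsilon> P \<and> traj_active n P j \<and>
     k_vanishing (\<lambda>t. f (P t)) k"

definition energy :: "(nat \<times> nat) set \<Rightarrow> (nat \<Rightarrow> nat \<Rightarrow> real \<Rightarrow> real) \<Rightarrow> (nat \<Rightarrow> real^'d::{finite,linorder}) \<Rightarrow> real" where
  "energy Ed Eij q = (\<Sum>(i,j)\<in>Ed. Eij i j (norm (q i - q j)))"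

definition stiff_bar_energy ::
  "(nat \<times> nat) set \<Rightarrow> (nat \<Rightarrow> nat \<Rightarrow> real \<Rightarrow> real) \<Rightarrow> (nat \<Rightarrow> real^'d::{finite,linorder}) \<Rightarrow> bool" where
  "stiff_bar_energy Ed Eij p \<longleftrightarrow> (\<forall>(i,j)\<in>Ed.
     let dij = norm (p i - p j) in
       real_analytic_at (Eij i j) dij \<and>
       (\<exists>r>0. \<forall>x. 0 < \<bar>x - dij\<bar> \<and> \<bar>x - dij\<bar> < r \<longrightarrow> Eij i j dij < Eij i j x) \<and>
       (deriv ^^ 2) (Eij i j) dij > 0)"

end

theory Submission
  imports Defs "HOL-Complex_Analysis.Complex_Analysis"
begin

definition hext :: "(real \<Rightarrow> real) \<Rightarrow> real \<Rightarrow> real \<Rightarrow> (complex \<Rightarrow> complex) \<Rightarrow> bool" where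
  "hext f x r F \<longleftrightarrow> 0 < r \<and> F holomorphic_on ball (of_real x) r \<and>
     (\<forall>t. \<bar>t - x\<bar> < r \<longrightarrow> F (of_real t) = of_real (f t))"

lemma analytic_hext:
  assumes "real_analytic_at f x"
  shows "\<exists>r F. hext f x r F"
proof -
  obtain r a where r: "r > 0" and sa: "\<And>y. \<bar>y - x\<bar> < r \<Longrightarrow> (\<lambda>k. a k * (y - x) ^ k) sums f y"
    using assms unfolding real_analytic_at_def by blast
  define F where "F w = (\<Sum>k. complex_of_real (a k) * (w - of_real x) ^ k)" for w
  have sF: "(\<lambda>k. complex_of_real (a k) * (w - of_real x) ^ k) sums F w" if w: "w \<in> ball (of_real x) r" for w
  proof -
    define y where "y = x + (norm (w - of_real x) + r) / 2"
    have w': "norm (w - of_real x) < r" using w by (simp add: dist_norm norm_minus_commute)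
    have y: "\<bar>y - x\<bar> < r" "norm (w - of_real x) < norm (complex_of_real (y - x))"
    proof -
      have n0: "0 \<le> norm (w - of_real x)" by simp
      have e: "y - x = (norm (w - of_real x) + r) / 2" unfolding y_def by simp
      show "\<bar>y - x\<bar> < r" proof -
        have "\<And>u::real. 0 \<le> u \<Longrightarrow> u < r \<Longrightarrow> \<bar>(u + r)/2\<bar> < r" by auto
        then show ?thesis unfolding e using w' n0 by blast
      qed
      have "norm (complex_of_real (y - x)) = \<bar>y - x\<bar>" by (simp only: norm_of_real)
      then show "norm (w - of_real x) < norm (complex_of_real (y - x))" unfolding e using w' n0 by auto
    qed
    have "summable (\<lambda>k. a k * (y - x) ^ k)" using sa[OF y(1)] sums_summable by blast
    then have "summable (\<lambda>k. complex_of_real (a k * (y - x) ^ k))"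
      by (simp only: summable_complex_of_real)
    then have "summable (\<lambda>k. complex_of_real (a k) * (complex_of_real (y - x)) ^ k)"
      by simp
    from powser_inside[OF this y(2)] show ?thesis
      unfolding F_def by (simp add: summable_sums)
  qed
  have hol: "F holomorphic_on ball (of_real x) r"
    by (rule power_series_holomorphic) (use sF in auto)
  have "F (of_real t) = of_real (f t)" if t: "\<bar>t - x\<bar> < r" for t
  proof -
    have "(\<lambda>k. complex_of_real (a k * (t - x) ^ k)) sums complex_of_real (f t)"
      using sums_of_real[OF sa[OF t]] by simp
    moreover have "of_real t \<in> ball (complex_of_real x) r" using t
      by (simp add: dist_norm norm_minus_commute flip: of_real_diff)
    from sF[OF this] have "(\<lambda>k. complex_of_real (a k * (t - x) ^ k)) sums F (of_real t)"
      by simp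
    ultimately show ?thesis using sums_unique2 by blast
  qed
  then show ?thesis unfolding hext_def using r hol by blast
qed

lemma hext_step:
  assumes hol: "G holomorphic_on ball (complex_of_real x) r"
    and eq: "\<And>s. \<bar>s - x\<bar> < r \<Longrightarrow> G (of_real s) = of_real (g s)"
    and t: "\<bar>t - x\<bar> < r"
  shows "(g has_real_derivative Re (deriv G (of_real t))) (at t)"
    and "deriv G (of_real t) = of_real (Re (deriv G (of_real t)))"
proof -
  define D where "D = deriv G (of_real t)"
  have tin: "complex_of_real t \<in> ball (complex_of_real x) r" using t
    by (simp add: dist_norm norm_minus_commute flip: of_real_diff)
  have "(G has_field_derivative D) (at (of_real t))"
    unfolding D_def by (rule holomorphic_derivI[OF hol open_ball tin])
  then have d1: "((\<lambda>s. G (of_real s)) has_vector_derivative D) (at t)"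
    by (rule has_vector_derivative_real_field)
  have d2: "((\<lambda>s. complex_of_real (g s)) has_vector_derivative D) (at t)"
  proof (rule has_vector_derivative_transform_within_open[OF d1, of "ball x r"])
    show "t \<in> ball x r" using t by (simp add: dist_real_def abs_minus_commute)
    show "\<And>y. y \<in> ball x r \<Longrightarrow> G (complex_of_real y) = complex_of_real (g y)"
      using eq by (simp add: dist_real_def abs_minus_commute)
  qed simp
  have "((\<lambda>s. Re (complex_of_real (g s))) has_field_derivative Re D) (at t)"
    using has_field_derivative_Re[OF d2] .
  then show "(g has_real_derivative Re (deriv G (of_real t))) (at t)" unfolding D_def by simp
  have "((\<lambda>s. Im (complex_of_real (g s))) has_field_derivative Im D) (at t)"
    using has_field_derivative_Im[OF d2] .
  then have "((\<lambda>s. 0) has_field_derivative Im D) (at t)" by simp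
  then have "Im D = 0" using DERIV_const DERIV_unique by blast
  then show "deriv G (of_real t) = of_real (Re (deriv G (of_real t)))"
    unfolding D_def[symmetric] by (simp add: complex_eq_iff)
qed

lemma hext_deriv:
  assumes "hext f x r F"
  shows "\<bar>t - x\<bar> < r \<Longrightarrow> (deriv ^^ i) F (of_real t) = of_real ((deriv ^^ i) f t)"
proof (induction i arbitrary: t)
  case 0
  then show ?case using assms unfolding hext_def by simp
next
  case (Suc i)
  have hol: "(deriv ^^ i) F holomorphic_on ball (complex_of_real x) r"
    using assms unfolding hext_def by (auto intro: holomorphic_higher_deriv)
  note st = hext_step[OF hol Suc.IH Suc.prems]
  have "deriv ((deriv ^^ i) f) t = Re (deriv ((deriv ^^ i) F) (of_real t))"
    using st(1) DERIV_imp_deriv by blast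
  then show ?case using st(2) by simp
qed

lemma hext_has_deriv:
  assumes "hext f x r F" "\<bar>t - x\<bar> < r"
  shows "((deriv ^^ i) f has_real_derivative (deriv ^^ (Suc i)) f t) (at t)"
proof -
  have hol: "(deriv ^^ i) F holomorphic_on ball (complex_of_real x) r"
    using assms unfolding hext_def by (auto intro: holomorphic_higher_deriv)
  note st = hext_step[OF hol hext_deriv[OF assms(1)] assms(2)]
  have "deriv ((deriv ^^ i) f) t = Re (deriv ((deriv ^^ i) F) (of_real t))"
    using st(1) DERIV_imp_deriv by blast
  then show ?thesis using st(1) by simp
qed

lemma factor_zero:
  assumes holf: "f holomorphic_on ball \<xi> r" and "0 < n"
      and dfz: "\<And>i. \<lbrakk>0 < i; i < n\<rbrakk> \<Longrightarrow> (deriv ^^ i) f \<xi> = 0"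
   obtains g where "g holomorphic_on ball \<xi> r"
                "\<And>w. w \<in> ball \<xi> r \<Longrightarrow> f w - f \<xi> = (w - \<xi>)^n * g w"
                "g \<xi> = (deriv ^^ n) f \<xi> / fact n"
proof -
  define g where "g w = suminf (\<lambda>i. (deriv ^^ (i + n)) f \<xi> / (fact(i + n)) * (w - \<xi>)^i)" for w
  have sumsg: "(\<lambda>i. (deriv ^^ (i + n)) f \<xi> / (fact(i + n)) * (w - \<xi>)^i) sums g w"
   and feq: "f w - f \<xi> = (w - \<xi>)^n * g w"
       if w: "w \<in> ball \<xi> r" for w
  proof -
    define powf where "powf = (\<lambda>i. (deriv ^^ i) f \<xi>/(fact i) * (w - \<xi>)^i)"
    have [simp]: "powf 0 = f \<xi>"
      by (simp add: powf_def)
    have sing: "{..<n} - {i. powf i = 0} = (if f \<xi> = 0 then {} else {0})"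
      unfolding powf_def using \<open>0 < n\<close> dfz by (auto simp: dfz; metis funpow_0 not_gr0)
    have "powf sums f w"
      unfolding powf_def by (rule holomorphic_power_series [OF holf w])
    moreover have "(\<Sum>i<n. powf i) = f \<xi>"
      by (subst sum.setdiff_irrelevant [symmetric]; simp add: dfz sing)
    ultimately have fsums: "(\<lambda>i. powf (i+n)) sums (f w - f \<xi>)"
      using w sums_iff_shift' by metis
    then have *: "summable (\<lambda>i. (w - \<xi>) ^ n * ((deriv ^^ (i + n)) f \<xi> * (w - \<xi>) ^ i / fact (i + n)))"
      unfolding powf_def using sums_summable
      by (auto simp: power_add mult_ac)
    have "summable (\<lambda>i. (deriv ^^ (i + n)) f \<xi> * (w - \<xi>) ^ i / fact (i + n))"
    proof (cases "w=\<xi>")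
      case False then show ?thesis
        using summable_mult [OF *, of "1 / (w - \<xi>) ^ n"] by simp
    next
      case True then show ?thesis
        by (auto simp: Power.semiring_1_class.power_0_left intro!: summable_finite [of "{0}"]
                 split: if_split_asm)
    qed
    then show sumsg: "(\<lambda>i. (deriv ^^ (i + n)) f \<xi> / (fact(i + n)) * (w - \<xi>)^i) sums g w"
      by (simp add: summable_sums_iff g_def)
    show "f w - f \<xi> = (w - \<xi>)^n * g w"
      using sums_mult [OF sumsg, of "(w - \<xi>) ^ n"]
      by (intro sums_unique2 [OF fsums]) (auto simp: power_add mult_ac powf_def)
  qed
  then have holg: "g holomorphic_on ball \<xi> r"
    by (meson sumsg power_series_holomorphic)
  have "g \<xi> = (deriv ^^ n) f \<xi> / fact n"
    unfolding g_def
    by (subst suminf_finite [of "{0}"]) auto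
  then show ?thesis using that holg feq by blast
qed

lemma hol_cont_delta:
  assumes "g holomorphic_on ball \<xi> r" "0 < r" "0 < e"
  shows "\<exists>\<delta>>0. \<delta> \<le> r \<and> (\<forall>w. norm (w - \<xi>) < \<delta> \<longrightarrow> norm (g w - g \<xi>) < e)"
proof -
  have "continuous_on (ball \<xi> r) g" using assms(1) holomorphic_on_imp_continuous_on by blast
  then have "isCont g \<xi>" using continuous_on_eq_continuous_at[of "ball \<xi> r" g] assms(2) by simp
  then obtain d where d: "d > 0" "\<And>w. dist w \<xi> < d \<Longrightarrow> dist (g w) (g \<xi>) < e"
    unfolding continuous_at_eps_delta using assms(3) by blast
  show ?thesis
    by (rule exI[of _ "min d r"]) (use d assms(2) in \<open>auto simp: dist_norm\<close>)
qed

lemma hext_UB: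
  assumes h: "hext f 0 r F" and kv: "k_vanishing f k"
  shows "\<exists>C \<delta>. \<delta> > 0 \<and> (\<forall>t. \<bar>t\<bar> < \<delta> \<longrightarrow> \<bar>f t - f 0\<bar> \<le> C * \<bar>t\<bar> ^ (k + 1))"
proof -
  have hol: "F holomorphic_on ball 0 r" and r: "r > 0" using h unfolding hext_def by auto
  have dz: "(deriv ^^ i) F 0 = 0" if "0 < i" "i < k + 1" for i
  proof -
    have "(deriv ^^ i) F (of_real 0) = of_real ((deriv ^^ i) f 0)"
      using hext_deriv[OF h, of 0 i] r by simp
    moreover have "(deriv ^^ i) f 0 = 0" using kv that unfolding k_vanishing_def by auto
    ultimately show ?thesis by simp
  qed
  obtain g where hg: "g holomorphic_on ball 0 r"
    and feq: "\<And>w. w \<in> ball 0 r \<Longrightarrow> F w - F 0 = (w - 0)^(k+1) * g w"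
  proof -
    have "0 < k + 1" by simp
    from factor_zero[OF hol this dz] that show thesis by blast
  qed
  obtain \<delta> where \<delta>: "\<delta> > 0" "\<delta> \<le> r" "\<And>w. norm (w - 0) < \<delta> \<Longrightarrow> norm (g w - g 0) < 1"
    using hol_cont_delta[OF hg r, of 1] by auto
  have "\<bar>f t - f 0\<bar> \<le> (norm (g 0) + 1) * \<bar>t\<bar> ^ (k + 1)" if t: "\<bar>t\<bar> < \<delta>" for t
  proof -
    have tin: "complex_of_real t \<in> ball 0 r" using t \<delta> by simp
    have e1: "F (of_real t) = of_real (f t)" "F 0 = of_real (f 0)"
      using h t \<delta> unfolding hext_def by (auto dest: spec[of _ 0])
    have "complex_of_real (f t - f 0) = (of_real t)^(k+1) * g (of_real t)"
      using feq[OF tin] e1 by simp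
    then have "\<bar>f t - f 0\<bar> = \<bar>t\<bar>^(k+1) * norm (g (of_real t))"
      by (metis norm_mult norm_of_real norm_power)
    moreover have "norm (g (of_real t)) \<le> norm (g 0) + 1"
      using \<delta>(3)[of "of_real t"] t norm_triangle_ineq2[of "g (of_real t)" "g 0"] by simp
    ultimately show ?thesis
      by (metis mult.commute mult_left_mono zero_le_power abs_ge_zero)
  qed
  then show ?thesis using \<delta>(1) by blast
qed

lemma hext_LB:
  assumes h: "hext f 0 r F" and kv: "\<not> k_vanishing f k"
  shows "\<exists>c \<delta>. c > 0 \<and> \<delta> > 0 \<and> (\<forall>t. \<bar>t\<bar> < \<delta> \<longrightarrow> c * \<bar>t\<bar> ^ k \<le> \<bar>f t - f 0\<bar>)"
proof -
  have hol: "F holomorphic_on ball 0 r" and r: "r > 0" using h unfolding hext_def by auto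
  have ex: "\<exists>i. i \<in> {1..k} \<and> (deriv ^^ i) f 0 \<noteq> 0" using kv unfolding k_vanishing_def by auto
  define n where "n = (LEAST i. i \<in> {1..k} \<and> (deriv ^^ i) f 0 \<noteq> 0)"
  have n: "n \<in> {1..k}" "(deriv ^^ n) f 0 \<noteq> 0"
    using LeastI_ex[OF ex] unfolding n_def by auto
  have cd: "(deriv ^^ i) F 0 = of_real ((deriv ^^ i) f 0)" for i
    using hext_deriv[OF h, of 0 i] r by simp
  have dz: "(deriv ^^ i) F 0 = 0" if "0 < i" "i < n" for i
  proof -
    have "(deriv ^^ i) f 0 = 0"
    proof (rule ccontr)
      assume "(deriv ^^ i) f 0 \<noteq> 0"
      then have "n \<le> i" unfolding n_def using that n(1) by (intro Least_le) auto
      then show False using that by simp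
    qed
    then show ?thesis using cd by simp
  qed
  have n0: "0 < n" using n(1) by simp
  obtain g where hg: "g holomorphic_on ball 0 r"
    and feq: "\<And>w. w \<in> ball 0 r \<Longrightarrow> F w - F 0 = (w - 0)^n * g w"
    and g0: "g 0 = (deriv ^^ n) F 0 / fact n"
    using factor_zero[OF hol n0 dz] by auto
  have g0nz: "norm (g 0) > 0" using g0 cd n(2) by simp
  obtain \<delta> where \<delta>: "\<delta> > 0" "\<delta> \<le> r" "\<And>w. norm (w - 0) < \<delta> \<Longrightarrow> norm (g w - g 0) < norm (g 0) / 2"
    using hol_cont_delta[OF hg r, of "norm (g 0) / 2"] g0nz by auto
  have "norm (g 0) / 2 * \<bar>t\<bar> ^ k \<le> \<bar>f t - f 0\<bar>" if t: "\<bar>t\<bar> < min \<delta> 1" for t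
  proof -
    have tin: "complex_of_real t \<in> ball 0 r" using t \<delta> by simp
    have e1: "F (of_real t) = of_real (f t)" "F 0 = of_real (f 0)"
      using h t \<delta> unfolding hext_def by (auto dest: spec[of _ 0])
    have "complex_of_real (f t - f 0) = (of_real t)^n * g (of_real t)"
      using feq[OF tin] e1 by simp
    then have eq: "\<bar>f t - f 0\<bar> = \<bar>t\<bar>^n * norm (g (of_real t))"
      by (metis norm_mult norm_of_real norm_power)
    have gl: "norm (g (of_real t)) \<ge> norm (g 0) / 2"
      using \<delta>(3)[of "of_real t"] t norm_triangle_ineq2[of "g 0" "g (of_real t)"]
      by (simp add: norm_minus_commute)
    have pk: "\<bar>t\<bar> ^ k \<le> \<bar>t\<bar> ^ n"
      using t n(1) by (intro power_decreasing) auto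
    have "norm (g 0) / 2 * \<bar>t\<bar> ^ k \<le> norm (g 0) / 2 * \<bar>t\<bar> ^ n"
      using pk g0nz by (intro mult_left_mono) auto
    also have "\<dots> \<le> norm (g (of_real t)) * \<bar>t\<bar> ^ n"
      using gl by (intro mult_right_mono) auto
    finally show ?thesis using eq by (simp add: mult.commute)
  qed
  then show ?thesis using g0nz \<delta>(1)
    by (intro exI[of _ "norm (g 0) / 2"] exI[of _ "min \<delta> 1"]) auto
qed

definition has_hext :: "(real \<Rightarrow> real) \<Rightarrow> bool" where
  "has_hext f \<longleftrightarrow> (\<exists>r F. hext f 0 r F)"

lemma hext_mono: "hext f x r F \<Longrightarrow> 0 < r' \<Longrightarrow> r' \<le> r \<Longrightarrow> hext f x r' F"
  unfolding hext_def by (auto intro: holomorphic_on_subset)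

lemma has_hext_const: "has_hext (\<lambda>t. c)"
  unfolding has_hext_def hext_def
  by (rule exI[of _ 1], rule exI[of _ "\<lambda>w. of_real c"]) auto

lemma has_hext_add:
  assumes "has_hext f" "has_hext g" shows "has_hext (\<lambda>t. f t + g t)"
proof -
  obtain r F s G where a: "hext f 0 r F" "hext g 0 s G" using assms unfolding has_hext_def by blast
  then have "hext f 0 (min r s) F" "hext g 0 (min r s) G"
    by (auto intro: hext_mono simp: hext_def)
  then have "hext (\<lambda>t. f t + g t) 0 (min r s) (\<lambda>w. F w + G w)"
    unfolding hext_def by (auto intro: holomorphic_intros)
  then show ?thesis unfolding has_hext_def by blast
qed

lemma has_hext_diff:
  assumes "has_hext f" "has_hext g" shows "has_hext (\<lambda>t. f t - g t)"
proof -
  obtain r F s G where a: "hext f 0 r F" "hext g 0 s G" using assms unfolding has_hext_def by blast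
  then have "hext f 0 (min r s) F" "hext g 0 (min r s) G"
    by (auto intro: hext_mono simp: hext_def)
  then have "hext (\<lambda>t. f t - g t) 0 (min r s) (\<lambda>w. F w - G w)"
    unfolding hext_def by (auto intro: holomorphic_intros)
  then show ?thesis unfolding has_hext_def by blast
qed

lemma has_hext_mult:
  assumes "has_hext f" "has_hext g" shows "has_hext (\<lambda>t. f t * g t)"
proof -
  obtain r F s G where a: "hext f 0 r F" "hext g 0 s G" using assms unfolding has_hext_def by blast
  then have "hext f 0 (min r s) F" "hext g 0 (min r s) G"
    by (auto intro: hext_mono simp: hext_def)
  then have "hext (\<lambda>t. f t * g t) 0 (min r s) (\<lambda>w. F w * G w)"
    unfolding hext_def by (auto intro: holomorphic_intros)
  then show ?thesis unfolding has_hext_def by blast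
qed

lemma has_hext_sum:
  assumes "finite S" "\<And>s. s \<in> S \<Longrightarrow> has_hext (f s)"
  shows "has_hext (\<lambda>t. \<Sum>s\<in>S. f s t)"
  using assms
proof (induction S rule: finite_induct)
  case empty
  then show ?case using has_hext_const[of 0] by simp
next
  case (insert x F)
  then show ?case using has_hext_add[of "f x" "\<lambda>t. \<Sum>s\<in>F. f s t"] by simp
qed

lemma has_hext_comp_sqrt:
  assumes hm: "hext m 0 r M" and m0: "m 0 > 0" and mnn: "\<And>t. 0 \<le> m t"
    and hE: "hext E (sqrt (m 0)) \<rho> G"
  shows "has_hext (\<lambda>t. E (sqrt (m t)))"
proof -
  define s0 where "s0 = m 0"
  define d where "d = sqrt s0"
  have s0: "s0 > 0" using m0 s0_def by simp
  have \<rho>: "\<rho> > 0" and hG: "G holomorphic_on ball (of_real d) \<rho>"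
    using hE unfolding hext_def d_def s0_def by auto
  have nr: "complex_of_real s0 \<notin> \<real>\<^sub>\<le>\<^sub>0" using s0 by (auto simp: nonpos_Reals_def)
  have "isCont csqrt (complex_of_real s0)" using continuous_at_csqrt[OF nr] .
  then obtain e1 where e1: "e1 > 0" "\<And>u. dist u (of_real s0) < e1 \<Longrightarrow> dist (csqrt u) (csqrt (of_real s0)) < \<rho>"
    unfolding continuous_at_eps_delta using \<rho> by blast
  define \<epsilon> where "\<epsilon> = min e1 s0"
  have \<epsilon>: "\<epsilon> > 0" using e1 s0 by (simp add: \<epsilon>_def)
  have avoid: "u \<notin> \<real>\<^sub>\<le>\<^sub>0" if "norm (u - of_real s0) < \<epsilon>" for u :: complex
  proof
    assume "u \<in> \<real>\<^sub>\<le>\<^sub>0"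
    then obtain v where v: "u = of_real v" "v \<le> 0" by (auto simp: nonpos_Reals_def)
    then have "norm (u - of_real s0) = \<bar>v - s0\<bar>" by (simp flip: of_real_diff)
    also have "\<dots> \<ge> s0" using v s0 by simp
    finally show False using that \<epsilon>_def by simp
  qed
  have near: "norm (csqrt u - of_real d) < \<rho>" if "norm (u - of_real s0) < \<epsilon>" for u :: complex
  proof -
    have "dist (csqrt u) (csqrt (of_real s0)) < \<rho>" using e1(2)[of u] that \<epsilon>_def by (simp add: dist_norm)
    moreover have "csqrt (of_real s0) = of_real d" using s0 by (simp add: d_def csqrt_of_real)
    ultimately show ?thesis by (simp add: dist_norm)
  qed
  have r: "r > 0" and hM: "M holomorphic_on ball 0 r" using hm unfolding hext_def by auto
  have M0: "M 0 = of_real s0" using hm r unfolding hext_def s0_def by (auto dest: spec[of _ 0])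
  obtain \<delta> where \<delta>: "\<delta> > 0" "\<delta> \<le> r" "\<And>w. norm (w - 0) < \<delta> \<Longrightarrow> norm (M w - M 0) < \<epsilon>"
    using hol_cont_delta[OF hM r \<epsilon>] by blast
  have hM': "M holomorphic_on ball 0 \<delta>" using hM \<delta> by (auto intro: holomorphic_on_subset)
  have hS: "(\<lambda>w. csqrt (M w)) holomorphic_on ball 0 \<delta>"
    by (rule holomorphic_on_csqrt'[OF hM']) (use \<delta>(3) avoid M0 in auto)
  have img: "(\<lambda>w. csqrt (M w)) ` ball 0 \<delta> \<subseteq> ball (of_real d) \<rho>"
  proof
    fix z assume "z \<in> (\<lambda>w. csqrt (M w)) ` ball 0 \<delta>"
    then obtain w where w: "norm w < \<delta>" "z = csqrt (M w)" by auto
    have "norm (csqrt (M w) - of_real d) < \<rho>" using near \<delta>(3)[of w] w M0 by simp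
    then show "z \<in> ball (of_real d) \<rho>" using w by (simp add: dist_norm norm_minus_commute)
  qed
  have hH: "(G \<circ> (\<lambda>w. csqrt (M w))) holomorphic_on ball 0 \<delta>"
    by (rule holomorphic_on_compose_gen[OF hS hG img])
  have "(G \<circ> (\<lambda>w. csqrt (M w))) (of_real t) = of_real (E (sqrt (m t)))" if t: "\<bar>t - 0\<bar> < \<delta>" for t
  proof -
    have Mt: "M (of_real t) = of_real (m t)" using hm t \<delta> unfolding hext_def by auto
    have cs: "csqrt (M (of_real t)) = of_real (sqrt (m t))" using Mt mnn[of t] by (simp add: csqrt_of_real)
    have "norm (csqrt (M (of_real t)) - of_real d) < \<rho>"
      using near \<delta>(3)[of "of_real t"] t M0 by simp
    then have "\<bar>sqrt (m t) - sqrt (m 0)\<bar> < \<rho>" using cs unfolding d_def s0_def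
      by (simp flip: of_real_diff)
    then have "G (of_real (sqrt (m t))) = of_real (E (sqrt (m t)))" using hE unfolding hext_def by blast
    then show ?thesis using cs by simp
  qed
  then have "hext (\<lambda>t. E (sqrt (m t))) 0 \<delta> (G \<circ> (\<lambda>w. csqrt (M w)))"
    unfolding hext_def using \<delta> hH by simp
  then show ?thesis unfolding has_hext_def by blast
qed

lemma energy_local:
  assumes hE: "hext E d \<rho> G"
    and minE: "\<exists>r>0. \<forall>x. 0 < \<bar>x - d\<bar> \<and> \<bar>x - d\<bar> < r \<longrightarrow> E d < E x"
    and d2: "(deriv ^^ 2) E d > 0"
  shows "\<exists>c C \<delta>. c > 0 \<and> \<delta> > 0 \<and> (\<forall>x. \<bar>x - d\<bar> < \<delta> \<longrightarrow> c * (x - d)^2 \<le> E x - E d \<and> E x - E d \<le> C * (x - d)^2)"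
proof -
  obtain r0 where r0: "r0 > 0" "\<And>x. 0 < \<bar>x - d\<bar> \<Longrightarrow> \<bar>x - d\<bar> < r0 \<Longrightarrow> E d < E x"
    using minE by blast
  have \<rho>: "\<rho> > 0" and hG: "G holomorphic_on ball (of_real d) \<rho>" using hE unfolding hext_def by auto
  have "((deriv ^^ 0) E has_real_derivative (deriv ^^ Suc 0) E d) (at d)"
    by (rule hext_has_deriv[OF hE]) (use \<rho> in simp)
  then have dE: "(E has_real_derivative deriv E d) (at d)" by simp
  have "\<forall>y. \<bar>d - y\<bar> < r0 \<longrightarrow> E d \<le> E y"
  proof (intro allI impI)
    fix y assume "\<bar>d - y\<bar> < r0"
    then show "E d \<le> E y" using r0(2)[of y] by (cases "y = d") (auto simp: abs_minus_commute)
  qed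
  from DERIV_local_min[OF dE r0(1) this] have d1: "deriv E d = 0" .
  have cd: "(deriv ^^ i) G (of_real d) = of_real ((deriv ^^ i) E d)" for i
    using hext_deriv[OF hE, of d i] \<rho> by simp
  have dz: "(deriv ^^ i) G (of_real d) = 0" if "0 < i" "i < 2" for i
  proof -
    have "i = 1" using that by simp
    then show ?thesis using cd[of 1] d1 by simp
  qed
  obtain g where hg: "g holomorphic_on ball (of_real d) \<rho>"
    and feq: "\<And>w. w \<in> ball (of_real d) \<rho> \<Longrightarrow> G w - G (of_real d) = (w - of_real d)^2 * g w"
    and g0: "g (of_real d) = (deriv ^^ 2) G (of_real d) / fact 2"
  proof -
    have "0 < (2::nat)" by simp
    from factor_zero[OF hG this dz] that show thesis by blast
  qed
  define a where "a = (deriv ^^ 2) E d / 2"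
  have a: "a > 0" using d2 a_def by simp
  have A2: "(deriv ^^ 2) E d = a * 2" using a_def by simp
  have "g (of_real d) * 2 = of_real ((deriv ^^ 2) E d)" using g0 cd[of 2] by simp
  then have "g (of_real d) * 2 = of_real a * 2" unfolding A2 by simp
  then have ga: "g (of_real d) = of_real a" by simp
  obtain \<delta> where \<delta>: "\<delta> > 0" "\<delta> \<le> \<rho>" "\<And>w. norm (w - of_real d) < \<delta> \<Longrightarrow> norm (g w - g (of_real d)) < a / 2"
    using hol_cont_delta[OF hg \<rho>, of "a/2"] a by auto
  have "a / 2 * (x - d)^2 \<le> E x - E d \<and> E x - E d \<le> 3 * a / 2 * (x - d)^2" if x: "\<bar>x - d\<bar> < \<delta>" for x
  proof -
    have xin: "complex_of_real x \<in> ball (of_real d) \<rho>" using x \<delta>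
      by (simp add: dist_norm norm_minus_commute flip: of_real_diff)
    have e1: "G (of_real x) = of_real (E x)" "G (of_real d) = of_real (E d)"
      using hE x \<delta> unfolding hext_def by auto
    have "complex_of_real (E x - E d) = complex_of_real ((x - d)^2) * g (of_real x)"
      using feq[OF xin] e1 by simp
    then have "Re (complex_of_real (E x - E d)) = Re (complex_of_real ((x - d)^2) * g (of_real x))"
      by simp
    then have eq: "E x - E d = (x - d)^2 * Re (g (of_real x))" by simp
    have "norm (g (of_real x) - of_real a) < a / 2"
      using \<delta>(3)[of "of_real x"] x ga by (simp flip: of_real_diff)
    then have "\<bar>Re (g (of_real x)) - a\<bar> < a / 2"
      using abs_Re_le_cmod[of "g (of_real x) - of_real a"] by simp
    then have b: "a / 2 \<le> Re (g (of_real x))" "Re (g (of_real x)) \<le> 3 * a / 2" by arith+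
    have sq: "0 \<le> (x - d)^2" by simp
    show ?thesis unfolding eq using mult_left_mono[OF b(1) sq] mult_left_mono[OF b(2) sq]
      by (simp add: mult.commute)
  qed
  then show ?thesis using a \<delta>(1) by (intro exI[of _ "a/2"] exI[of _ "3 * a / 2"] exI[of _ \<delta>]) auto
qed

lemma edge_bound:
  assumes hm: "hext m 0 r M" and m0: "m 0 > 0" and mnn: "\<And>t. 0 \<le> m t"
    and loc: "\<exists>c C \<delta>. c > 0 \<and> \<delta> > 0 \<and> (\<forall>x. \<bar>x - sqrt (m 0)\<bar> < \<delta> \<longrightarrow>
          c * (x - sqrt (m 0))^2 \<le> E x - E (sqrt (m 0)) \<and> E x - E (sqrt (m 0)) \<le> C * (x - sqrt (m 0))^2)"
  shows "\<exists>c C. c > 0 \<and> eventually (\<lambda>t. c * (m t - m 0)^2 \<le> E (sqrt (m t)) - E (sqrt (m 0)) \<and>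
            E (sqrt (m t)) - E (sqrt (m 0)) \<le> C * (m t - m 0)^2) (nhds 0)"
proof -
  define d where "d = sqrt (m 0)"
  have d: "d > 0" using m0 d_def by simp
  have dd: "d^2 = m 0" using m0 d_def by simp
  obtain c C \<delta> where c: "c > 0" "\<delta> > 0" and cb: "\<And>x. \<bar>x - d\<bar> < \<delta> \<Longrightarrow>
          c * (x - d)^2 \<le> E x - E d \<and> E x - E d \<le> C * (x - d)^2"
    using loc unfolding d_def[symmetric] by blast
  have r: "r > 0" using hm unfolding hext_def by simp
  have "((deriv ^^ 0) m has_real_derivative (deriv ^^ Suc 0) m 0) (at 0)"
    by (rule hext_has_deriv[OF hm]) (use r in simp)
  then have "isCont m 0" using DERIV_isCont by simp
  then have "isCont (\<lambda>t. sqrt (m t)) 0" by (intro continuous_intros)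
  then obtain \<eta> where \<eta>: "\<eta> > 0" "\<And>t. dist t 0 < \<eta> \<Longrightarrow> dist (sqrt (m t)) (sqrt (m 0)) < min \<delta> d"
    unfolding continuous_at_eps_delta using c d by (metis min_less_iff_conj)
  define c' where "c' = c / (9 * d^2)"
  define C' where "C' = max C 0 / d^2"
  have "c' * (m t - m 0)^2 \<le> E (sqrt (m t)) - E d \<and> E (sqrt (m t)) - E d \<le> C' * (m t - m 0)^2"
    if t: "dist t 0 < \<eta>" for t
  proof -
    define x where "x = sqrt (m t)"
    have x0: "x \<ge> 0" using x_def mnn[of t] by simp
    have xd: "\<bar>x - d\<bar> < \<delta>" "\<bar>x - d\<bar> < d" using \<eta>(2)[OF t] unfolding x_def d_def dist_real_def by auto
    have xx: "x^2 = m t" using mnn[of t] x_def by simp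
    have mm: "(m t - m 0)^2 = (x - d)^2 * (x + d)^2"
      unfolding xx[symmetric] dd[symmetric] by (simp add: power2_eq_square algebra_simps)
    have p1: "d^2 \<le> (x + d)^2" using x0 d by (intro power_mono) auto
    have p2: "(x + d)^2 \<le> (3 * d)^2" using xd x0 d by (intro power_mono) auto
    have sq: "0 \<le> (x - d)^2" by simp
    have lo: "(m t - m 0)^2 \<le> (x - d)^2 * (9 * d^2)"
      unfolding mm using mult_left_mono[OF p2 sq] by (simp add: power_mult_distrib)
    have hi: "(x - d)^2 * d^2 \<le> (m t - m 0)^2"
      unfolding mm using mult_left_mono[OF p1 sq] by simp
    have d2: "d^2 > 0" using d by simp
    have A: "c' * (m t - m 0)^2 \<le> c * (x - d)^2"
    proof -
      have "c' * (m t - m 0)^2 \<le> c' * ((x - d)^2 * (9 * d^2))"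
        using lo c d2 unfolding c'_def by (intro mult_left_mono) auto
      also have "\<dots> = c * (x - d)^2" unfolding c'_def using d2 by (simp add: field_simps)
      finally show ?thesis .
    qed
    have B: "max C 0 * (x - d)^2 \<le> C' * (m t - m 0)^2"
    proof -
      have "max C 0 * (x - d)^2 = (max C 0 / d^2) * ((x - d)^2 * d^2)" using d2 by (simp add: field_simps)
      also have "\<dots> \<le> C' * (m t - m 0)^2" unfolding C'_def
        using hi d2 by (intro mult_left_mono) auto
      finally show ?thesis .
    qed
    have B2: "C * (x - d)^2 \<le> max C 0 * (x - d)^2" using sq by (intro mult_right_mono) auto
    show ?thesis using cb[OF xd(1)] A B B2 unfolding x_def by linarith
  qed
  then have "eventually (\<lambda>t. c' * (m t - m 0)^2 \<le> E (sqrt (m t)) - E (sqrt (m 0)) \<and>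
            E (sqrt (m t)) - E (sqrt (m 0)) \<le> C' * (m t - m 0)^2) (nhds 0)"
    unfolding eventually_nhds_metric d_def using \<eta>(1) by blast
  moreover have "c' > 0" using c d unfolding c'_def by simp
  ultimately show ?thesis by blast
qed

lemma eventually_pow_contra:
  fixes c K :: real
  assumes c: "c > 0" and ev: "eventually (\<lambda>t. c * \<bar>t\<bar>^a \<le> K * \<bar>t\<bar>^(a+1)) (nhds (0::real))"
  shows False
proof -
  obtain d where d: "d > 0" "\<And>t. dist t 0 < d \<Longrightarrow> c * \<bar>t\<bar>^a \<le> K * \<bar>t\<bar>^(a+1)"
    using ev unfolding eventually_nhds_metric by blast
  define t where "t = min (d/2) (c / (2 * (\<bar>K\<bar> + 1)))"
  have t0: "t > 0" using d c unfolding t_def by simp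
  have "dist t 0 < d" using t0 d unfolding t_def by simp
  from d(2)[OF this] have ineq: "c * t^a \<le> K * t^(a+1)" using t0 by simp
  have tk: "t * (\<bar>K\<bar> + 1) \<le> c / 2"
  proof -
    have "t \<le> c / (2 * (\<bar>K\<bar> + 1))" unfolding t_def by simp
    then have "t * (\<bar>K\<bar> + 1) \<le> c / (2 * (\<bar>K\<bar> + 1)) * (\<bar>K\<bar> + 1)"
      by (intro mult_right_mono) auto
    moreover have "c / (2 * (\<bar>K\<bar> + 1)) * (\<bar>K\<bar> + 1) = c / 2"
      by (simp add: field_simps add_nonneg_eq_0_iff)
    ultimately show ?thesis by linarith
  qed
  have "K * t \<le> \<bar>K\<bar> * t" using t0 by (intro mult_right_mono) auto
  moreover have tk': "\<bar>K\<bar> * t + t \<le> c / 2" using tk by (simp add: algebra_simps)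
  ultimately have Kt: "K * t < c" using c t0 by linarith
  have ta: "t^a > 0" using t0 by simp
  have "K * t^(a+1) = (K * t) * t^a" by (simp add: algebra_simps)
  also have "\<dots> < c * t^a" using Kt ta by (intro mult_strict_right_mono) auto
  finally show False using ineq by simp
qed

lemma ev_nhds0: "(\<exists>\<delta>>0. \<forall>t. \<bar>t\<bar> < \<delta> \<longrightarrow> P t) \<Longrightarrow> eventually P (nhds (0::real))"
  unfolding eventually_nhds_metric by (auto simp: dist_real_def)

lemma core:
  fixes mm X :: "'e \<Rightarrow> real \<Rightarrow> real" and e :: "real \<Rightarrow> real"
  assumes fin: "finite S"
    and hm: "\<And>s. s \<in> S \<Longrightarrow> has_hext (mm s)"
    and he: "has_hext e"
    and esum: "\<And>t. e t - e 0 = (\<Sum>s\<in>S. X s t)"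
    and bnd: "\<And>s. s \<in> S \<Longrightarrow> \<exists>c C. c > 0 \<and> eventually (\<lambda>t. c * (mm s t - mm s 0)^2 \<le> X s t \<and> X s t \<le> C * (mm s t - mm s 0)^2) (nhds 0)"
  shows "((\<forall>s\<in>S. k_vanishing (mm s) k) \<longleftrightarrow> k_vanishing e (2*k)) \<and> (k_vanishing e (2*k) \<longleftrightarrow> k_vanishing e (2*k+1))"
proof -
  obtain cE CE where cE: "\<And>s. s \<in> S \<Longrightarrow> cE s > 0"
    and evb: "\<And>s. s \<in> S \<Longrightarrow> eventually (\<lambda>t. cE s * (mm s t - mm s 0)^2 \<le> X s t \<and> X s t \<le> CE s * (mm s t - mm s 0)^2) (nhds 0)"
  proof -
    have "\<forall>s\<in>S. \<exists>p. fst p > 0 \<and> eventually (\<lambda>t. fst p * (mm s t - mm s 0)^2 \<le> X s t \<and> X s t \<le> snd p * (mm s t - mm s 0)^2) (nhds 0)"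
    proof
      fix s assume "s \<in> S"
      from bnd[OF this] obtain c C where "c > 0" "eventually (\<lambda>t. c * (mm s t - mm s 0)^2 \<le> X s t \<and> X s t \<le> C * (mm s t - mm s 0)^2) (nhds 0)"
        by blast
      then show "\<exists>p. fst p > 0 \<and> eventually (\<lambda>t. fst p * (mm s t - mm s 0)^2 \<le> X s t \<and> X s t \<le> snd p * (mm s t - mm s 0)^2) (nhds 0)"
        by (intro exI[of _ "(c, C)"]) simp
    qed
    from bchoice[OF this] obtain pf where "\<forall>s\<in>S. fst (pf s) > 0 \<and> eventually (\<lambda>t. fst (pf s) * (mm s t - mm s 0)^2 \<le> X s t \<and> X s t \<le> snd (pf s) * (mm s t - mm s 0)^2) (nhds 0)"
      by blast
    then show thesis using that[of "\<lambda>s. fst (pf s)" "\<lambda>s. snd (pf s)"] by blast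
  qed
  have evB: "eventually (\<lambda>t. \<forall>s\<in>S. cE s * (mm s t - mm s 0)^2 \<le> X s t \<and> X s t \<le> CE s * (mm s t - mm s 0)^2) (nhds 0)"
    by (rule eventually_ball_finite[OF fin]) (use evb in blast)
  obtain re Fe where hE: "hext e 0 re Fe" using he unfolding has_hext_def by blast
  have I: "k_vanishing e (2*k+1)" if kv: "\<forall>s\<in>S. k_vanishing (mm s) k"
  proof (rule ccontr)
    assume nv: "\<not> k_vanishing e (2*k+1)"
    have "\<exists>KS. eventually (\<lambda>t. (mm s t - mm s 0)^2 \<le> KS * \<bar>t\<bar>^(2*k+2)) (nhds 0)" if s: "s \<in> S" for s
    proof -
      obtain r M where h: "hext (mm s) 0 r M" using hm[OF s] unfolding has_hext_def by blast
      obtain C \<delta> where C: "\<delta> > 0" "\<And>t. \<bar>t\<bar> < \<delta> \<Longrightarrow> \<bar>mm s t - mm s 0\<bar> \<le> C * \<bar>t\<bar> ^ (k + 1)"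
        using hext_UB[OF h] kv s by blast
      have "(mm s t - mm s 0)^2 \<le> C^2 * \<bar>t\<bar>^(2*k+2)" if t: "\<bar>t\<bar> < \<delta>" for t
      proof -
        have "\<bar>mm s t - mm s 0\<bar>^2 \<le> (C * \<bar>t\<bar> ^ (k + 1))^2"
          using C(2)[OF t] by (intro power_mono) auto
        also have "\<dots> = C^2 * (\<bar>t\<bar> ^ (k + 1))^2" by (simp only: power_mult_distrib)
        also have "\<dots> = C^2 * \<bar>t\<bar>^(2*k+2)"
        proof -
          have "2*k+2 = (k+1)*2" by simp
          then show ?thesis by (simp only: power_mult)
        qed
        finally show ?thesis by simp
      qed
      then have "eventually (\<lambda>t. (mm s t - mm s 0)^2 \<le> C^2 * \<bar>t\<bar>^(2*k+2)) (nhds 0)"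
        by (intro ev_nhds0) (use C(1) in blast)
      then show ?thesis by blast
    qed
    then have "\<forall>s\<in>S. \<exists>KS. eventually (\<lambda>t. (mm s t - mm s 0)^2 \<le> KS * \<bar>t\<bar>^(2*k+2)) (nhds 0)"
      by blast
    from bchoice[OF this] obtain KS where KS: "\<And>s. s \<in> S \<Longrightarrow> eventually (\<lambda>t. (mm s t - mm s 0)^2 \<le> KS s * \<bar>t\<bar>^(2*k+2)) (nhds 0)"
      by blast
    have evK: "eventually (\<lambda>t. \<forall>s\<in>S. (mm s t - mm s 0)^2 \<le> KS s * \<bar>t\<bar>^(2*k+2)) (nhds 0)"
      by (rule eventually_ball_finite[OF fin]) (use KS in blast)
    obtain c \<delta> where cd: "c > 0" "\<delta> > 0" "\<And>t. \<bar>t\<bar> < \<delta> \<Longrightarrow> c * \<bar>t\<bar> ^ (2*k+1) \<le> \<bar>e t - e 0\<bar>"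
      using hext_LB[OF hE nv] by blast
    define K where "K = (\<Sum>s\<in>S. max (CE s) 0 * KS s)"
    have evL: "eventually (\<lambda>t. c * \<bar>t\<bar> ^ (2*k+1) \<le> \<bar>e t - e 0\<bar>) (nhds 0)"
      by (rule ev_nhds0) (use cd in blast)
    have "eventually (\<lambda>t. c * \<bar>t\<bar> ^ (2*k+1) \<le> K * \<bar>t\<bar>^(2*k+1+1)) (nhds 0)"
      using evB evK evL
    proof (eventually_elim)
      case (elim t)
      have Xn: "0 \<le> X s t" if "s \<in> S" for s
      proof -
        have "0 \<le> cE s * (mm s t - mm s 0)^2" using cE[OF that] by simp
        then show ?thesis using elim(1) that by (meson order_trans)
      qed
      have Xu: "X s t \<le> max (CE s) 0 * KS s * \<bar>t\<bar>^(2*k+2)" if s: "s \<in> S" for s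
      proof -
        have "X s t \<le> CE s * (mm s t - mm s 0)^2" using elim(1) s by blast
        also have "\<dots> \<le> max (CE s) 0 * (mm s t - mm s 0)^2" by (intro mult_right_mono) auto
        also have "\<dots> \<le> max (CE s) 0 * (KS s * \<bar>t\<bar>^(2*k+2))"
          using elim(2) s by (intro mult_left_mono) auto
        finally show ?thesis by (simp add: mult.assoc)
      qed
      have "\<bar>e t - e 0\<bar> = (\<Sum>s\<in>S. X s t)" using esum[of t] Xn by (simp add: sum_nonneg)
      also have "\<dots> \<le> (\<Sum>s\<in>S. max (CE s) 0 * KS s * \<bar>t\<bar>^(2*k+2))" by (rule sum_mono) (rule Xu)
      also have "\<dots> = K * \<bar>t\<bar>^(2*k+1+1)" unfolding K_def by (simp add: sum_distrib_right)
      finally show ?case using elim(3) by simp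
    qed
    then show False using eventually_pow_contra[OF cd(1)] by blast
  qed
  have II: "\<forall>s\<in>S. k_vanishing (mm s) k" if kv: "k_vanishing e (2*k)"
  proof (rule ccontr)
    assume "\<not> (\<forall>s\<in>S. k_vanishing (mm s) k)"
    then obtain s0 where s0: "s0 \<in> S" "\<not> k_vanishing (mm s0) k" by blast
    obtain r M where h: "hext (mm s0) 0 r M" using hm[OF s0(1)] unfolding has_hext_def by blast
    obtain c \<delta> where cd: "c > 0" "\<delta> > 0" "\<And>t. \<bar>t\<bar> < \<delta> \<Longrightarrow> c * \<bar>t\<bar> ^ k \<le> \<bar>mm s0 t - mm s0 0\<bar>"
      using hext_LB[OF h s0(2)] by blast
    obtain K \<delta>' where K: "\<delta>' > 0" "\<And>t. \<bar>t\<bar> < \<delta>' \<Longrightarrow> \<bar>e t - e 0\<bar> \<le> K * \<bar>t\<bar> ^ (2*k + 1)"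
      using hext_UB[OF hE kv] by blast
    have pos: "cE s0 * c^2 > 0" using cE[OF s0(1)] cd(1) by simp
    have ev1: "eventually (\<lambda>t. c * \<bar>t\<bar> ^ k \<le> \<bar>mm s0 t - mm s0 0\<bar>) (nhds 0)"
      by (rule ev_nhds0) (use cd in blast)
    have ev2: "eventually (\<lambda>t. \<bar>e t - e 0\<bar> \<le> K * \<bar>t\<bar> ^ (2*k + 1)) (nhds 0)"
      by (rule ev_nhds0) (use K in blast)
    have "eventually (\<lambda>t. cE s0 * c^2 * \<bar>t\<bar> ^ (2*k) \<le> K * \<bar>t\<bar>^(2*k+1)) (nhds 0)"
      using evB ev1 ev2
    proof (eventually_elim)
      case (elim t)
      have Xn: "0 \<le> X s t" if "s \<in> S" for s
      proof -
        have "0 \<le> cE s * (mm s t - mm s 0)^2" using cE[OF that] by simp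
        then show ?thesis using elim(1) that by (meson order_trans)
      qed
      have sq: "(c * \<bar>t\<bar> ^ k)^2 \<le> \<bar>mm s0 t - mm s0 0\<bar>^2"
        using elim(2) cd(1) by (intro power_mono) auto
      have "cE s0 * c^2 * \<bar>t\<bar> ^ (2*k) = cE s0 * (c^2 * (\<bar>t\<bar> ^ k)^2)"
      proof -
        have "2*k = k*2" by simp
        then show ?thesis by (simp only: power_mult mult.assoc)
      qed
      also have "\<dots> = cE s0 * (c * \<bar>t\<bar> ^ k)^2" by (simp only: power_mult_distrib)
      also have "\<dots> \<le> cE s0 * (mm s0 t - mm s0 0)^2"
        using sq cE[OF s0(1)] by (intro mult_left_mono) auto
      also have "\<dots> \<le> X s0 t" using elim(1) s0(1) by blast
      also have "\<dots> \<le> (\<Sum>s\<in>S. X s t)" by (rule member_le_sum[OF s0(1)]) (use Xn fin in auto)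
      also have "\<dots> = e t - e 0" using esum[of t] by simp
      also have "\<dots> \<le> K * \<bar>t\<bar>^(2*k+1)" using elim(3) by simp
      finally show ?case .
    qed
    then show False using eventually_pow_contra[OF pos] by simp
  qed
  have III: "k_vanishing e (2*k)" if "k_vanishing e (2*k+1)"
    using that unfolding k_vanishing_def by auto
  show ?thesis
  proof (intro conjI iffI)
    show "k_vanishing e (2*k)" if "\<forall>s\<in>S. k_vanishing (mm s) k" using III I that by blast
    show "\<forall>s\<in>S. k_vanishing (mm s) k" if "k_vanishing e (2*k)" using II that by blast
    show "k_vanishing e (2*k+1)" if "k_vanishing e (2*k)" using I II that by blast
    show "k_vanishing e (2*k)" if "k_vanishing e (2*k+1)" using III that by blast
  qed
qed

lemma normsq_vec: "(norm (x::real^'d))^2 = (\<Sum>c\<in>UNIV. x$c * x$c)"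
  by (simp add: power2_norm_eq_inner inner_vec_def)

theorem theorem3p13:
  fixes n l :: nat and Ed :: "(nat \<times> nat) set"
    and p :: "nat \<Rightarrow> real^'d::{finite,linorder}"
    and Eij :: "nat \<Rightarrow> nat \<Rightarrow> real \<Rightarrow> real"
    and \<epsilon> :: real and P :: "real \<Rightarrow> nat \<Rightarrow> real^'d::{finite,linorder}" and j k :: nat
  assumes "framework n Ed p"
    and "pinned n l p"
    and "stiff_bar_energy Ed Eij p"
    and "trajectory n l p \<epsilon> P"
  shows "(bar_flex n Ed l p \<epsilon> P j k \<longleftrightarrow> f_flex n l p \<epsilon> (energy Ed Eij) P j (2 * k))
       \<and> (f_flex n l p \<epsilon> (energy Ed Eij) P j (2 * k) \<longleftrightarrow> f_flex n l p \<epsilon> (energy Ed Eij) P j (2 * k + 1))"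
proof -
  have graph: "\<And>a b. (a, b) \<in> Ed \<Longrightarrow> 1 \<le> a \<and> a < b \<and> b \<le> n"
    and neq: "\<And>a b. (a, b) \<in> Ed \<Longrightarrow> p a \<noteq> p b"
    using assms(1) unfolding framework_def is_graph_def by auto
  have fin: "finite Ed"
  proof (rule finite_subset)
    show "Ed \<subseteq> {1..n} \<times> {1..n}" using graph by fastforce
  qed simp
  have eps: "\<epsilon> > 0"
    and ana: "\<And>i c. i \<in> {1..n} \<Longrightarrow> real_analytic_at (\<lambda>s. P s i $ c) 0"
    and P0: "\<And>i. i \<in> {1..n} \<Longrightarrow> P 0 i = p i"
    using assms(4) unfolding trajectory_def by auto
  have stiff: "\<And>a b. (a, b) \<in> Ed \<Longrightarrow>
       real_analytic_at (Eij a b) (norm (p a - p b)) \<and>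
       (\<exists>r>0. \<forall>x. 0 < \<bar>x - norm (p a - p b)\<bar> \<and> \<bar>x - norm (p a - p b)\<bar> < r \<longrightarrow> Eij a b (norm (p a - p b)) < Eij a b x) \<and>
       (deriv ^^ 2) (Eij a b) (norm (p a - p b)) > 0"
    using assms(3) unfolding stiff_bar_energy_def Let_def by auto
  define mm where "mm s = (\<lambda>t. (norm (P t (fst s) - P t (snd s)))^2)" for s :: "nat \<times> nat"
  define X where "X s t = Eij (fst s) (snd s) (sqrt (mm s t)) - Eij (fst s) (snd s) (sqrt (mm s 0))" for s t
  define e where "e = (\<lambda>t. energy Ed Eij (P t))"
  have coord: "has_hext (\<lambda>t. P t i $ c)" if "i \<in> {1..n}" for i c
    using analytic_hext[OF ana[OF that]] unfolding has_hext_def .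
  have hm: "has_hext (mm s)" if s: "s \<in> Ed" for s
  proof -
    obtain a b where ab: "s = (a, b)" by (cases s)
    have ai: "a \<in> {1..n}" "b \<in> {1..n}" using graph[of a b] s ab by auto
    have eq: "mm s = (\<lambda>t. \<Sum>c\<in>UNIV. (P t a $ c - P t b $ c) * (P t a $ c - P t b $ c))"
      unfolding mm_def ab by (simp add: normsq_vec)
    show ?thesis unfolding eq
      by (intro has_hext_sum has_hext_mult has_hext_diff coord ai) simp
  qed
  have m0: "mm s 0 = (norm (p (fst s) - p (snd s)))^2" if s: "s \<in> Ed" for s
  proof -
    obtain a b where ab: "s = (a, b)" by (cases s)
    have ai: "a \<in> {1..n}" "b \<in> {1..n}" using graph[of a b] s ab by auto
    show ?thesis unfolding mm_def ab using P0[OF ai(1)] P0[OF ai(2)] by simp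
  qed
  have sq0: "sqrt (mm s 0) = norm (p (fst s) - p (snd s))" if s: "s \<in> Ed" for s
    using m0[OF s] by simp
  have mpos: "mm s 0 > 0" if s: "s \<in> Ed" for s
  proof -
    obtain a b where ab: "s = (a, b)" by (cases s)
    show ?thesis using m0[OF s] neq[of a b] s ab by simp
  qed
  have mnn: "\<And>t. 0 \<le> mm s t" for s unfolding mm_def by simp
  have Eloc: "\<exists>\<rho> G. hext (Eij (fst s) (snd s)) (sqrt (mm s 0)) \<rho> G" if s: "s \<in> Ed" for s
    using analytic_hext[of "Eij (fst s) (snd s)"] stiff[of "fst s" "snd s"] s sq0[OF s] by simp
  have hX: "has_hext (\<lambda>t. Eij (fst s) (snd s) (sqrt (mm s t)))" if s: "s \<in> Ed" for s
  proof -
    obtain r M where h: "hext (mm s) 0 r M" using hm[OF s] unfolding has_hext_def by blast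
    obtain \<rho> G where hE: "hext (Eij (fst s) (snd s)) (sqrt (mm s 0)) \<rho> G" using Eloc[OF s] by blast
    show ?thesis by (rule has_hext_comp_sqrt[OF h mpos[OF s] mnn hE])
  qed
  have eeq: "e = (\<lambda>t. \<Sum>s\<in>Ed. Eij (fst s) (snd s) (sqrt (mm s t)))"
    unfolding e_def energy_def mm_def by (simp add: case_prod_beta)
  have he: "has_hext e" unfolding eeq by (intro has_hext_sum fin hX)
  have esum: "e t - e 0 = (\<Sum>s\<in>Ed. X s t)" for t
    unfolding eeq X_def by (simp add: sum_subtractf)
  have bnd: "\<exists>c C. c > 0 \<and> eventually (\<lambda>t. c * (mm s t - mm s 0)^2 \<le> X s t \<and> X s t \<le> C * (mm s t - mm s 0)^2) (nhds 0)"
    if s: "s \<in> Ed" for s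
  proof -
    obtain r M where h: "hext (mm s) 0 r M" using hm[OF s] unfolding has_hext_def by blast
    obtain \<rho> G where hE: "hext (Eij (fst s) (snd s)) (sqrt (mm s 0)) \<rho> G" using Eloc[OF s] by blast
    have st: "(\<exists>r>0. \<forall>x. 0 < \<bar>x - sqrt (mm s 0)\<bar> \<and> \<bar>x - sqrt (mm s 0)\<bar> < r \<longrightarrow> Eij (fst s) (snd s) (sqrt (mm s 0)) < Eij (fst s) (snd s) x)"
      "(deriv ^^ 2) (Eij (fst s) (snd s)) (sqrt (mm s 0)) > 0"
      using stiff[of "fst s" "snd s"] s sq0[OF s] by auto
    from edge_bound[OF h mpos[OF s] mnn energy_local[OF hE st]]
    show ?thesis unfolding X_def .
  qed
  have C: "((\<forall>s\<in>Ed. k_vanishing (mm s) k) \<longleftrightarrow> k_vanishing e (2*k)) \<and> (k_vanishing e (2*k) \<longleftrightarrow> k_vanishing e (2*k+1))"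
    by (rule core[OF fin hm he esum bnd])
  have B: "(\<forall>(a,b)\<in>Ed. k_vanishing (\<lambda>t. (norm (P t a - P t b))\<^sup>2) k) \<longleftrightarrow> (\<forall>s\<in>Ed. k_vanishing (mm s) k)"
    unfolding mm_def by auto
  show ?thesis
    unfolding bar_flex_def f_flex_def B e_def[symmetric] using C by blast
qed

end
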